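(* If $p$ is a prime number, then $J_{p-1}=2$, i.e. the only vectors $(\delta_0,\ldots,\delta_{p-1})\in\{-1,1\}^{p}$ with $\sum_{i=0}^{p-1}\delta_i\binom{p-1}{i}=0$ are $\delta_i=(-1)^i$ for all $i$ and $\delta_i=-(-1)^i$ for all $i$.
   Context: $J_n$ denotes the number of vectors $(\delta_0,\ldots,\delta_n)\in\{-1,1\}^{n+1}$ with $\sum_{i=0}^n\delta_i\binom{n}{i}=0$. *)

theory Defs
  imports Main "HOL-Computational_Algebra.Primes"
begin

text \<open>Sign vectors (delta_0,...,delta_n) in {-1,1}^(n+1), represented as functions
  nat => int that are -1 or 1 on {0..n} and 0 (fixed default) outside.\<close>
definition sign_vectors :: "nat \<Rightarrow> (nat \<Rightarrow> int) set" where
  "sign_vectors n = {d. (\<forall>i\<in>{0..n}. d i \<in> {-1, 1}) \<and> (\<forall>i. i > n \<longrightarrow> d i = 0)}"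

definition J_set :: "nat \<Rightarrow> (nat \<Rightarrow> int) set" where
  "J_set n = {d \<in> sign_vectors n. (\<Sum>i=0..n. d i * int (n choose i)) = 0}"

definition J :: "nat \<Rightarrow> nat" where
  "J n = card (J_set n)"

end

theory Submission
  imports Defs
begin

lemma binom_cong:
  assumes p: "prime (p::nat)" and i: "i \<le> p - 1"
  shows "int p dvd int ((p - 1) choose i) - (-1) ^ i"
  using i
proof (induction i)
  case 0 then show ?case by simp
next
  case (Suc i)
  have p2: "p \<ge> 2" using p prime_ge_2_nat by blast
  have pas: "p choose (Suc i) = ((p - 1) choose i) + ((p - 1) choose (Suc i))"
    using p2 proof - have "p = Suc (p - 1)" using p2 by simp then show ?thesis by (metis binomial_Suc_Suc) qed
  have "p dvd p choose (Suc i)"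
    by (rule dvd_choose_prime) (use Suc.prems p2 p in auto)
  hence d1: "int p dvd int (p choose (Suc i))" by simp
  have d2: "int p dvd int ((p - 1) choose i) - (-1) ^ i" using Suc by simp
  have "int ((p - 1) choose (Suc i)) - (-1) ^ Suc i
        = int (p choose (Suc i)) - (int ((p - 1) choose i) - (-1) ^ i)"
    using pas by simp
  then show ?case using d1 d2 by (metis dvd_diff)
qed

lemma main_dir:
  assumes p: "prime (p::nat)" and d: "d \<in> J_set (p - 1)"
  shows "d = (\<lambda>i. if i \<le> p - 1 then (-1) ^ i else 0) \<or>
         d = (\<lambda>i. if i \<le> p - 1 then - ((-1) ^ i) else 0)"
proof -
  define n where "n = p - 1"
  have p2: "p \<ge> 2" using p prime_ge_2_nat by blast
  have dv: "\<forall>i\<in>{0..n}. d i \<in> {-1, 1}" and dz: "\<forall>i. i > n \<longrightarrow> d i = 0"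
    and ds: "(\<Sum>i=0..n. d i * int (n choose i)) = 0"
    using d unfolding J_set_def sign_vectors_def n_def by auto
  define e where "e i = d i * (-1) ^ i" for i
  have ev: "e i \<in> {-1, 1}" if "i \<le> n" for i
    using dv that unfolding e_def by (cases "even i") auto
  define S where "S = (\<Sum>i=0..n. e i)"
  have "int p dvd (\<Sum>i=0..n. d i * int (n choose i)) - S"
  proof -
    have "(\<Sum>i=0..n. d i * int (n choose i)) - S = (\<Sum>i=0..n. d i * (int (n choose i) - (-1)^i))"
      unfolding S_def e_def by (simp add: sum_subtractf[symmetric] algebra_simps)
    also have "int p dvd \<dots>"
      by (rule dvd_sum) (use binom_cong[OF p] n_def in auto)
    finally show ?thesis .
  qed
  hence pS: "int p dvd S" using ds by simp
  have cardn: "card {0..n} = p" using n_def p2 by simp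
  have up: "(\<Sum>i=0..n. 1 - e i) \<ge> 0" by (rule sum_nonneg) (use ev in force)
  have lo: "(\<Sum>i=0..n. 1 + e i) \<ge> 0" by (rule sum_nonneg) (use ev in force)
  have s1: "(\<Sum>i=0..n. 1 - e i) = int p - S" unfolding S_def using cardn
    by (simp add: sum_subtractf)
  have s2: "(\<Sum>i=0..n. 1 + e i) = int p + S" unfolding S_def using cardn
    by (simp add: sum.distrib)
  have allone: "\<forall>i\<in>{0..n}. e i = 1" if "S = int p"
  proof -
    have "(\<Sum>i=0..n. 1 - e i) = 0" using s1 that by simp
    hence "\<forall>i\<in>{0..n}. 1 - e i = 0"
      using sum_nonneg_eq_0_iff[of "{0..n}" "\<lambda>i. 1 - e i"] ev by force
    thus ?thesis by simp
  qed
  have allm: "\<forall>i\<in>{0..n}. e i = -1" if "S = - int p"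
  proof -
    have "(\<Sum>i=0..n. 1 + e i) = 0" using s2 that by simp
    hence "\<forall>i\<in>{0..n}. 1 + e i = 0"
      using sum_nonneg_eq_0_iff[of "{0..n}" "\<lambda>i. 1 + e i"] ev by force
    thus ?thesis by (auto simp: eq_neg_iff_add_eq_0 add.commute)
  qed
  have ee: "even (\<Sum>i=0..n. 1 + e i)"
    by (rule dvd_sum) (use ev in force)
  have Scases: "S = int p \<or> S = - int p"
  proof (cases "p = 2")
    case True
    hence n1: "n = 1" using n_def by simp
    have "d 0 + d 1 = 0" using ds n1 by simp
    hence d1: "d 1 = - d 0" by simp
    have "S = e 0 + e 1" unfolding S_def using n1 by simp
    also have "\<dots> = 2 * d 0" unfolding e_def using d1 by simp
    finally have S2: "S = 2 * d 0" .
    have "d 0 = -1 \<or> d 0 = 1" using dv by auto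
    hence "S = 2 \<or> S = -2" using S2 by auto
    thus ?thesis using True by auto
  next
    case False
    hence "odd p" using p prime_odd_nat p2 by auto
    hence "S \<noteq> 0" using ee s2 by auto
    moreover obtain k where k: "S = int p * k" using pS by blast
    moreover have "- int p \<le> S" "S \<le> int p" using up lo s1 s2 by auto
    ultimately have kk: "k \<noteq> 0" "int p * k \<le> int p" "- int p \<le> int p * k" by auto
    have pp: "int p > 0" using p2 by simp
    have "k \<le> 1"
    proof (rule ccontr)
      assume "\<not> k \<le> 1" hence "k \<ge> 2" by simp
      hence "int p * 2 \<le> int p * k" using pp by (intro mult_left_mono) auto
      thus False using kk pp by linarith
    qed
    moreover have "k \<ge> -1"
    proof (rule ccontr)
      assume "\<not> k \<ge> -1" hence "k \<le> -2" by simp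
      hence "int p * k \<le> int p * (-2)" using pp by (intro mult_left_mono) auto
      thus False using kk pp by linarith
    qed
    ultimately have "k = 1 \<or> k = -1" using kk by auto
    thus ?thesis using k by auto
  qed
  show ?thesis
  proof (cases "S = int p")
    case True
    have "d = (\<lambda>i. if i \<le> p - 1 then (-1) ^ i else 0)"
    proof
      fix i show "d i = (if i \<le> p - 1 then (-1) ^ i else 0)"
      proof (cases "i \<le> n")
        case True
        hence "d i * (-1)^i = 1" using allone \<open>S = int p\<close> e_def by auto
        hence "d i = (-1)^i" by (cases "even i") auto
        thus ?thesis using True n_def by simp
      qed (use dz n_def in auto)
    qed
    thus ?thesis by simp
  next
    case False
    hence S: "S = - int p" using Scases by auto
    have "d = (\<lambda>i. if i \<le> p - 1 then - ((-1) ^ i) else 0)"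
    proof
      fix i show "d i = (if i \<le> p - 1 then - ((-1) ^ i) else 0)"
      proof (cases "i \<le> n")
        case True
        hence "d i * (-1)^i = -1" using allm S e_def by auto
        hence "d i = - ((-1)^i)" by (cases "even i") auto
        thus ?thesis using True n_def by simp
      qed (use dz n_def in auto)
    qed
    thus ?thesis by simp
  qed
qed

theorem theorem6:
  fixes p :: nat
  assumes "prime p"
  shows "J (p - 1) = 2 \<and>
    J_set (p - 1) = {(\<lambda>i. if i \<le> p - 1 then (-1) ^ i else 0),
                     (\<lambda>i. if i \<le> p - 1 then - ((-1) ^ i) else 0)}"
proof -
  define n where "n = p - 1"
  have p2: "p \<ge> 2" using assms prime_ge_2_nat by blast
  hence n0: "n > 0" using n_def by simp
  define a where "a = (\<lambda>i::nat. if i \<le> n then (-1::int) ^ i else 0)"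
  define b where "b = (\<lambda>i::nat. if i \<le> n then - ((-1::int) ^ i) else 0)"
  have alt: "(\<Sum>i=0..n. (-1::int)^i * int (n choose i)) = 0"
    using choose_alternating_sum[OF n0, where 'a=int] by (simp add: atLeast0AtMost)
  have sa: "(\<Sum>i=0..n. a i * int (n choose i)) = 0"
    using alt unfolding a_def by simp
  have sb: "(\<Sum>i=0..n. b i * int (n choose i)) = 0"
  proof -
    have "(\<Sum>i=0..n. b i * int (n choose i)) = - (\<Sum>i=0..n. (-1::int)^i * int (n choose i))"
      unfolding b_def by (simp add: sum_negf[symmetric])
    thus ?thesis using alt by simp
  qed
  have aS: "a \<in> J_set n" using sa unfolding J_set_def sign_vectors_def a_def
    by (auto simp: minus_one_power_iff)
  have bS: "b \<in> J_set n" using sb unfolding J_set_def sign_vectors_def b_def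
    by (auto simp: minus_one_power_iff)
  have eq: "J_set n = {a, b}"
    using main_dir[OF assms] aS bS unfolding a_def b_def n_def by blast
  have "a \<noteq> b"
  proof
    assume "a = b" hence "a 0 = b 0" by simp
    thus False unfolding a_def b_def by simp
  qed
  hence "J n = 2" unfolding J_def eq by simp
  thus ?thesis using eq unfolding a_def b_def n_def by simp
qed

end
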